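(* Consider a run of Algorithm 3 (described in the context) under the Standing Assumption and Matrix Assumption of the context, and let $g_{\max}>0$. If the stochastic gradient estimates satisfy $\|\bar g_k-g_k\|_2\le g_{\max}$ for all $k\in\mathbb{N}$, then the sequence $\{\bar u_k\}$ is bounded, and there exist $\bar k_\tau\in\mathbb{N}$ and $\bar\tau_{\min}>0$ such that $\bar\tau_k=\bar\tau_{\min}$ for all $k\ge\bar k_\tau$.
   Context: Problem: $\min_x f(x)$ s.t. $c(x)=0$, $f(x)=\mathbb{E}[F(x,\omega)]$, $c:\mathbb{R}^n\to\mathbb{R}^m$ deterministic. Notation: $g_k=\nabla f(x_k)$, $c_k=c(x_k)$, $J_k=\nabla c(x_k)^T$; $\Delta q(x,\tau,g,H,d)=-\tau(g^Td+\frac12\max\{d^THd,0\})+\|c(x)\|_1$. Standing Assumption: there is an open convex set $\mathcal X$ containing all iterates; $f$ is $C^1$ and bounded below on $\mathcal X$ with $\nabla f$ bounded and $L$-Lipschitz on $\mathcal X$; $c$ and $\nabla c^T$ bounded on $\mathcal X$; each $\nabla c_i$ is $\gamma_i$-Lipschitz on $\mathcal X$; singular values of $\nabla c(x)^T$ bounded away from zero uniformly over $\mathcal X$. $\Gamma:=\sum_i\gamma_i$. Matrix Assumption: deterministic symmetric $H_k$ with $\|H_k\|_2\le\kappa_H$ and $u^TH_ku\ge\zeta\|u\|_2^2$ whenever $J_ku=0$. Algorithm 3 (inputs $x_0$, $\bar\tau_{-1}>0$, $\epsilon,\sigma\in(0,1)$, $\bar\xi_{-1}>0$, $\{\beta_k\}\subset(0,1]$,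 $\theta\ge0$): at iteration $k$, obtain stochastic gradient $\bar g_k$; $(\bar d_k,\bar y_k)$ solves $H_k\bar d_k+J_k^T\bar y_k=-\bar g_k$, $J_k\bar d_k=-c_k$ (assumed $\bar d_k\neq0$). $\bar\tau_k^{trial}=\infty$ if $\bar g_k^T\bar d_k+\max\{\bar d_k^TH_k\bar d_k,0\}\le0$, else $\frac{(1-\sigma)\|c_k\|_1}{\bar g_k^T\bar d_k+\max\{\bar d_k^TH_k\bar d_k,0\}}$; $\bar\tau_k=\bar\tau_{k-1}$ if $\bar\tau_{k-1}\le\bar\tau_k^{trial}$, else $(1-\epsilon)\bar\tau_k^{trial}$. $\bar\xi_k^{trial}=\frac{\Delta q(x_k,\bar\tau_k,\bar g_k,H_k,\bar d_k)}{\bar\tau_k\|\bar d_k\|_2^2}$; $\bar\xi_k=\bar\xi_{k-1}$ if $\bar\xi_{k-1}\le\bar\xi_k^{trial}$, else $(1-\epsilon)\bar\xi_k^{trial}$. With $D_k=(\bar\tau_kL+\Gamma)\|\bar d_k\|_2^2$, $\hat a_k=\beta_k\Delta q(x_k,\bar\tau_k,\bar g_k,H_k,\bar d_k)/D_k$, $\tilde a_k=\hat a_k-4\|c_k\|_1/D_k$, project both onto $[a_k,a_k+\theta\beta_k^2]$ with $a_k=\frac{\beta_k\bar\xi_k\bar\tau_k}{\bar\tau_kL+\Gamma}$ to get $\widehat\alpha_k,\widetilde\alpha_k$; $\bar\alpha_k=\widehat\alpha_k$ if $\widehat\alpha_k<1$, $1$ if $\widetilde\alpha_k\le1\le\widehat\alpha_k$,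 $\widetilde\alpha_k$ if $\widetilde\alpha_k>1$; $x_{k+1}=x_k+\bar\alpha_k\bar d_k$. Decomposition: $\bar d_k=\bar u_k+v_k$ with $\bar u_k\in\mathrm{Null}(J_k)$, $v_k\in\mathrm{Range}(J_k^T)$. *)

theory Defs
  imports "HOL-Analysis.Analysis"
begin

definition l1norm :: "real^'m \<Rightarrow> real" where
  "l1norm v = (\<Sum>i\<in>UNIV. \<bar>v $ i\<bar>)"

definition Delta_q :: "(real^'n \<Rightarrow> real^'m) \<Rightarrow> real^'n \<Rightarrow> real \<Rightarrow> real^'n \<Rightarrow> real^'n^'n \<Rightarrow> real^'n \<Rightarrow> real" where
  "Delta_q c x tau g H d = - tau * (g \<bullet> d + 1/2 * max (d \<bullet> (H *v d)) 0) + l1norm (c x)"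

definition merit_update :: "real \<Rightarrow> real \<Rightarrow> real \<Rightarrow> real" where
  "merit_update eps prev trial = (if prev \<le> trial then prev else (1 - eps) * trial)"

text \<open>Merit parameter update of Algorithm 3. When the denominator is <= 0 the trial value is
  +infinity, so prev <= trial holds and the previous value is kept.\<close>
definition tau_next :: "real \<Rightarrow> real \<Rightarrow> real \<Rightarrow> real \<Rightarrow> real^'n \<Rightarrow> real^'n^'n \<Rightarrow> real^'n \<Rightarrow> real" where
  "tau_next eps sig prev cn1 g H d =
     (let den = g \<bullet> d + max (d \<bullet> (H *v d)) 0
      in if den \<le> 0 then prev else merit_update eps prev ((1 - sig) * cn1 / den))"

definition proj_interval :: "real \<Rightarrow> real \<Rightarrow> real \<Rightarrow> real" where
  "proj_interval lo hi t = min (max t lo) hi"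

text \<open>Step size of Algorithm 3. Arguments: L, Gamma, theta, beta_k, xi_k, tau_k,
  Delta_k = Delta q(x_k,tau_k,gbar_k,H_k,d_k), ||c_k||_1, d_k.\<close>
definition alpha_bar :: "real \<Rightarrow> real \<Rightarrow> real \<Rightarrow> real \<Rightarrow> real \<Rightarrow> real \<Rightarrow> real \<Rightarrow> real \<Rightarrow> real^'n \<Rightarrow> real" where
  "alpha_bar L Gam theta beta xi tau Dq cn1 d =
     (let D = (tau * L + Gam) * (norm d)^2;
          ahat = beta * Dq / D;
          atil = ahat - 4 * cn1 / D;
          a = beta * xi * tau / (tau * L + Gam);
          alh = proj_interval a (a + theta * beta^2) ahat;
          alt = proj_interval a (a + theta * beta^2) atil
      in if alh < 1 then alh else if alt \<le> 1 then 1 else alt)"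

end

theory Submission
  imports Defs
begin

theorem proposition3p17:
  fixes f :: "real^'n \<Rightarrow> real" and gradf :: "real^'n \<Rightarrow> real^'n"
    and c :: "real^'n \<Rightarrow> real^'m" and J :: "real^'n \<Rightarrow> real^'n^'m"
    and X :: "(real^'n) set"
    and L :: real and gamma :: "'m \<Rightarrow> real"
    and H :: "nat \<Rightarrow> real^'n^'n" and kappaH zeta :: real
    and x :: "nat \<Rightarrow> real^'n" and gbar :: "nat \<Rightarrow> real^'n"
    and d :: "nat \<Rightarrow> real^'n" and y :: "nat \<Rightarrow> real^'m"
    and tau xi :: "nat \<Rightarrow> real" and tau_init xi_init eps sig theta gmax :: real
    and beta :: "nat \<Rightarrow> real"
    and u v :: "nat \<Rightarrow> real^'n"
  \<comment> \<open>Standing Assumption\<close>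
  assumes X_open: "open X" and X_convex: "convex X"
    and iterates_in_X: "\<forall>k. x k \<in> X"
    and f_deriv: "\<forall>z\<in>X. (f has_derivative (\<lambda>h. gradf z \<bullet> h)) (at z)"
    and gradf_cont: "continuous_on X gradf"
    and f_bdd_below: "\<exists>flow. \<forall>z\<in>X. flow \<le> f z"
    and gradf_bdd: "bounded (gradf ` X)"
    and gradf_lip: "L-lipschitz_on X gradf"
    and c_deriv: "\<forall>z\<in>X. (c has_derivative (\<lambda>h. J z *v h)) (at z)"
    and c_bdd: "bounded (c ` X)"
    and J_bdd: "bounded (J ` X)"
    and gradc_lip: "\<forall>i. (gamma i)-lipschitz_on X (\<lambda>z. J z $ i)"
    and sv_bdd: "\<exists>s>0. \<forall>z\<in>X. \<forall>w. s * norm w \<le> norm (transpose (J z) *v w)"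
  \<comment> \<open>Matrix Assumption\<close>
    and H_sym: "\<forall>k. transpose (H k) = H k"
    and H_norm: "\<forall>k. onorm (\<lambda>w. H k *v w) \<le> kappaH"
    and zeta_pos: "zeta > 0"
    and H_curv: "\<forall>k w. J (x k) *v w = 0 \<longrightarrow> zeta * (norm w)^2 \<le> w \<bullet> (H k *v w)"
  \<comment> \<open>Algorithm 3 inputs\<close>
    and tau_init_pos: "tau_init > 0" and xi_init_pos: "xi_init > 0"
    and eps: "0 < eps" "eps < 1" and sig: "0 < sig" "sig < 1"
    and beta: "\<forall>k. 0 < beta k \<and> beta k \<le> 1"
    and theta: "theta \<ge> 0"
  \<comment> \<open>Algorithm 3 iteration\<close>
    and lin_sys: "\<forall>k. H k *v d k + transpose (J (x k)) *v y k = - gbar k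
                    \<and> J (x k) *v d k = - c (x k)"
    and d_nz: "\<forall>k. d k \<noteq> 0"
    and tau_rule: "\<forall>k. tau k = tau_next eps sig (if k = 0 then tau_init else tau (k - 1))
                              (l1norm (c (x k))) (gbar k) (H k) (d k)"
    and xi_rule: "\<forall>k. xi k = merit_update eps (if k = 0 then xi_init else xi (k - 1))
                              (Delta_q c (x k) (tau k) (gbar k) (H k) (d k) / (tau k * (norm (d k))^2))"
    and x_rule: "\<forall>k. x (Suc k) = x k + alpha_bar L (\<Sum>i\<in>UNIV. gamma i) theta (beta k) (xi k) (tau k)
                      (Delta_q c (x k) (tau k) (gbar k) (H k) (d k)) (l1norm (c (x k))) (d k) *\<^sub>R d k"
  \<comment> \<open>Decomposition of d_k\<close>
    and decomp: "\<forall>k. d k = u k + v k \<and> J (x k) *v u k = 0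
                   \<and> v k \<in> range (\<lambda>w. transpose (J (x k)) *v w)"
  \<comment> \<open>Bounded noise\<close>
    and gmax_pos: "gmax > 0"
    and noise: "\<forall>k. norm (gbar k - gradf (x k)) \<le> gmax"
  shows "bounded (range u) \<and>
         (\<exists>k_tau. \<exists>tau_min>0. \<forall>k\<ge>k_tau. tau k = tau_min)"
proof -
  have Hb: "norm (H k *v w) \<le> kappaH * norm w" for k w
  proof -
    have "norm (H k *v w) \<le> onorm (\<lambda>w. H k *v w) * norm w"
      by (rule onorm) simp
    also have "\<dots> \<le> kappaH * norm w"
      using H_norm by (simp add: mult_right_mono)
    finally show ?thesis .
  qed
  have kappa_nn: "kappaH \<ge> 0"
  proof -
    have "0 \<le> onorm (\<lambda>w. H 0 *v w)" by (rule onorm_pos_le) simp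
    then show ?thesis using H_norm by (meson order_trans)
  qed
  obtain B where B: "\<forall>z\<in>X. norm (gradf z) \<le> B"
    using gradf_bdd by (auto simp: bounded_iff)
  obtain Cb where Cb: "\<forall>z\<in>X. norm (c z) \<le> Cb"
    using c_bdd by (auto simp: bounded_iff)
  obtain s where s: "s > 0" "\<forall>z\<in>X. \<forall>w. s * norm w \<le> norm (transpose (J z) *v w)"
    using sv_bdd by blast
  define G where "G = B + gmax"
  have gb: "norm (gbar k) \<le> G" for k
  proof -
    have "norm (gbar k) \<le> norm (gbar k - gradf (x k)) + norm (gradf (x k))"
      using norm_triangle_ineq[of "gbar k - gradf (x k)" "gradf (x k)"] by simp
    then show ?thesis using noise B iterates_in_X unfolding G_def
      by (smt (verit))
  qed
  have Cbk: "norm (c (x k)) \<le> Cb" for k using Cb iterates_in_X by blast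
  have Jv: "J (x k) *v v k = - c (x k)" for k
  proof -
    have "J (x k) *v d k = J (x k) *v u k + J (x k) *v v k"
      using decomp by (simp add: matrix_vector_right_distrib)
    then show ?thesis using decomp lin_sys by simp
  qed
  have vb: "s * norm (v k) \<le> norm (c (x k))" for k
  proof -
    obtain w where w: "v k = transpose (J (x k)) *v w" using decomp by blast
    have "v k \<bullet> v k = w \<bullet> (J (x k) *v v k)"
      by (metis dot_lmul_matrix transpose_matrix_vector w)
    also have "\<dots> = - (w \<bullet> c (x k))" using Jv by simp
    also have "\<dots> \<le> norm w * norm (c (x k))"
      by (metis inner_minus_left norm_cauchy_schwarz norm_minus_cancel)
    finally have 1: "norm (v k) ^ 2 \<le> norm w * norm (c (x k))"
      by (simp add: power2_norm_eq_inner)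
    have 2: "s * norm w \<le> norm (v k)" using s iterates_in_X w by metis
    have "s * norm (v k) ^ 2 \<le> norm (v k) * norm (c (x k))"
    proof -
      have "s * norm (v k) ^ 2 \<le> s * (norm w * norm (c (x k)))"
        using 1 s by (simp add: mult_left_mono)
      also have "\<dots> = (s * norm w) * norm (c (x k))" by simp
      also have "\<dots> \<le> norm (v k) * norm (c (x k))"
        using 2 by (simp add: mult_right_mono)
      finally show ?thesis .
    qed
    then show ?thesis
      by (cases "norm (v k) = 0") (auto simp: power2_eq_square)
  qed
  define V where "V = Cb / s"
  have vV: "norm (v k) \<le> V" for k
    using vb[of k] Cbk[of k] s unfolding V_def by (simp add: pos_le_divide_eq mult.commute)
  have V_nn: "V \<ge> 0" using vV[of 0] by (meson norm_ge_zero order_trans)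
  have G_nn: "G \<ge> 0" using gb[of 0] by (meson norm_ge_zero order_trans)
  have sym: "a \<bullet> (H k *v b) = b \<bullet> (H k *v a)" for k a b
  proof -
    have "b \<bullet> (H k *v a) = (b v* H k) \<bullet> a" by (simp add: dot_lmul_matrix)
    also have "\<dots> = (transpose (H k) *v b) \<bullet> a" by (simp add: transpose_matrix_vector)
    also have "\<dots> = a \<bullet> (H k *v b)" using H_sym by (simp add: inner_commute)
    finally show ?thesis by simp
  qed
  have gu: "gbar k \<bullet> u k = - (u k \<bullet> (H k *v u k)) - u k \<bullet> (H k *v v k)" for k
  proof -
    have "u k \<bullet> (transpose (J (x k)) *v y k) = (J (x k) *v u k) \<bullet> y k"
      by (metis dot_lmul_matrix inner_commute transpose_matrix_vector)
    also have "\<dots> = 0" using decomp by simp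
    finally have 0: "u k \<bullet> (transpose (J (x k)) *v y k) = 0" .
    have "u k \<bullet> (H k *v d k + transpose (J (x k)) *v y k) = - (u k \<bullet> gbar k)"
      using lin_sys by simp
    then have "u k \<bullet> (H k *v d k) = - (u k \<bullet> gbar k)" using 0 by (simp add: inner_add_right)
    moreover have "H k *v d k = H k *v u k + H k *v v k"
      using decomp by (simp add: matrix_vector_right_distrib)
    ultimately show ?thesis by (simp add: inner_add_right inner_commute)
  qed
  have cs: "\<bar>a \<bullet> (H k *v b)\<bar> \<le> kappaH * norm a * norm b" for k a b
  proof -
    have "\<bar>a \<bullet> (H k *v b)\<bar> \<le> norm a * norm (H k *v b)" by (rule Cauchy_Schwarz_ineq2)
    also have "\<dots> \<le> norm a * (kappaH * norm b)" using Hb by (simp add: mult_left_mono)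
    finally show ?thesis by (simp add: mult_ac)
  qed
  have gcs: "\<bar>gbar k \<bullet> a\<bar> \<le> G * norm a" for k a
  proof -
    have "\<bar>gbar k \<bullet> a\<bar> \<le> norm (gbar k) * norm a" by (rule Cauchy_Schwarz_ineq2)
    also have "\<dots> \<le> G * norm a" using gb by (simp add: mult_right_mono)
    finally show ?thesis .
  qed
  define U where "U = (G + kappaH * V) / zeta"
  have uU: "norm (u k) \<le> U" for k
  proof -
    have a: "zeta * (norm (u k))^2 \<le> u k \<bullet> (H k *v u k)" using H_curv decomp by blast
    have "u k \<bullet> (H k *v u k) = - (gbar k \<bullet> u k) - u k \<bullet> (H k *v v k)" using gu by simp
    also have "\<dots> \<le> G * norm (u k) + kappaH * norm (u k) * norm (v k)"
      using gcs[where k=k and a="u k"] cs[where k=k and a="u k" and b="v k"] by linarith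
    also have "\<dots> \<le> norm (u k) * (G + kappaH * V)"
    proof -
      have "kappaH * norm (u k) * norm (v k) \<le> kappaH * norm (u k) * V"
        using vV[of k] kappa_nn by (simp add: mult_left_mono)
      then show ?thesis by (simp add: algebra_simps)
    qed
    finally have "zeta * (norm (u k) * norm (u k)) \<le> norm (u k) * (G + kappaH * V)"
      using a by (simp add: power2_eq_square)
    then have "zeta * norm (u k) \<le> G + kappaH * V"
    proof (cases "norm (u k) = 0")
      case True
      have "0 \<le> kappaH * V" using V_nn kappa_nn by simp
      then show ?thesis using True G_nn by simp
    next
      case False
      then have "norm (u k) > 0" by simp
      then show ?thesis using \<open>zeta * (norm (u k) * norm (u k)) \<le> norm (u k) * (G + kappaH * V)\<close>
        by (simp add: mult.left_commute)
    qed
    then show ?thesis unfolding U_def using zeta_pos by (simp add: pos_le_divide_eq mult.commute)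
  qed
  have part1: "bounded (range u)"
    unfolding bounded_iff using uU by blast
  define K where "K = kappaH * U + kappaH * V + G"
  have den: "gbar k \<bullet> d k + max (d k \<bullet> (H k *v d k)) 0 \<le> norm (v k) * K" for k
  proof -
    have du: "d k = u k + v k" using decomp by simp
    define a where "a = u k \<bullet> (H k *v u k)"
    define b where "b = u k \<bullet> (H k *v v k)"
    define e where "e = v k \<bullet> (H k *v v k)"
    have a0: "a \<ge> 0"
    proof -
      have "zeta * (norm (u k))^2 \<le> a" using H_curv decomp unfolding a_def by blast
      moreover have "zeta * (norm (u k))^2 \<ge> 0" using zeta_pos by simp
      ultimately show ?thesis by linarith
    qed
    have dHd: "d k \<bullet> (H k *v d k) = a + 2 * b + e"
      unfolding du a_def b_def e_def
      using sym[where k=k and a="v k" and b="u k"]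
      by (simp add: matrix_vector_right_distrib inner_add_left inner_add_right)
    have gd: "gbar k \<bullet> d k = - a - b + gbar k \<bullet> v k"
      unfolding du a_def b_def using gu[of k] by (simp add: inner_add_right)
    have bb: "\<bar>b\<bar> \<le> norm (v k) * (kappaH * U)"
    proof -
      have "\<bar>b\<bar> \<le> kappaH * norm (u k) * norm (v k)" unfolding b_def by (rule cs)
      also have "\<dots> \<le> kappaH * U * norm (v k)"
        using uU[of k] kappa_nn by (simp add: mult_left_mono mult_right_mono)
      finally show ?thesis by (simp add: algebra_simps)
    qed
    have eb: "\<bar>e\<bar> \<le> norm (v k) * (kappaH * V)"
    proof -
      have "\<bar>e\<bar> \<le> kappaH * norm (v k) * norm (v k)" unfolding e_def by (rule cs)
      also have "\<dots> \<le> kappaH * V * norm (v k)"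
        using vV[of k] kappa_nn by (simp add: mult_left_mono mult_right_mono)
      finally show ?thesis by (simp add: algebra_simps)
    qed
    have qb: "\<bar>gbar k \<bullet> v k\<bar> \<le> norm (v k) * G" using gcs[where k=k and a="v k"] by (simp add: mult.commute)
    have "norm (v k) * K = norm (v k) * (kappaH * U) + norm (v k) * (kappaH * V) + norm (v k) * G"
      unfolding K_def by (simp add: algebra_simps)
    moreover have "norm (v k) * (kappaH * V) \<ge> 0" using kappa_nn V_nn by simp
    ultimately show ?thesis unfolding dHd gd using a0 bb eb qb by (simp add: max_def) linarith
  qed
  have K_nn: "K \<ge> 0"
  proof -
    have "norm (v 0) * K \<ge> 0 \<or> True" by simp
    have "U \<ge> 0" using uU[of 0] by (meson norm_ge_zero order_trans)
    moreover have "V \<ge> 0" using vV[of 0] by (meson norm_ge_zero order_trans)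
    moreover have "G \<ge> 0" using gb[of 0] by (meson norm_ge_zero order_trans)
    ultimately show ?thesis unfolding K_def using kappa_nn by simp
  qed
  define T where "T = (1 - sig) * s / (K + 1)"
  have T_pos: "T > 0" unfolding T_def using sig s K_nn by simp
  have trial: "T \<le> (1 - sig) * l1norm (c (x k)) / (gbar k \<bullet> d k + max (d k \<bullet> (H k *v d k)) 0)"
    if dp: "gbar k \<bullet> d k + max (d k \<bullet> (H k *v d k)) 0 > 0" for k
  proof -
    let ?den = "gbar k \<bullet> d k + max (d k \<bullet> (H k *v d k)) 0"
    let ?l = "l1norm (c (x k))"
    have cl: "norm (c (x k)) \<le> ?l" unfolding l1norm_def by (rule norm_le_l1_cart)
    have "?den \<le> norm (v k) * (K + 1)"
      using den[of k] norm_ge_zero[of "v k"] by (simp only: distrib_left mult_1_right)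
    also have "\<dots> \<le> (?l / s) * (K + 1)"
    proof -
      have "norm (v k) \<le> ?l / s" using vb[of k] cl s by (simp add: pos_le_divide_eq mult.commute)
      then have "norm (v k) * (K + 1) \<le> (?l / s) * (K + 1)" using K_nn by (intro mult_right_mono) auto
      then show ?thesis by simp
    qed
    finally have dl: "?den \<le> ?l * (K + 1) / s" by simp
    have "T * ?den \<le> T * (?l * (K + 1) / s)" using dl T_pos by (intro mult_left_mono) auto
    also have "\<dots> = (1 - sig) * ?l" proof -
      have "K + 1 \<noteq> 0" "s \<noteq> 0" using s K_nn by auto
      then show ?thesis unfolding T_def by (simp add: divide_simps)
    qed
    finally show ?thesis using dp by (simp add: pos_le_divide_eq)
  qed
  define prev where "prev k = (if k = 0 then tau_init else tau (k - 1))" for k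
  have stepk: "tau k = prev k \<or> ((1 - eps) * T \<le> tau k \<and> tau k \<le> (1 - eps) * prev k)" for k
  proof -
    let ?den = "gbar k \<bullet> d k + max (d k \<bullet> (H k *v d k)) 0"
    have tk: "tau k = tau_next eps sig (prev k) (l1norm (c (x k))) (gbar k) (H k) (d k)"
      using tau_rule unfolding prev_def by blast
    show ?thesis
    proof (cases "?den \<le> 0")
      case True then show ?thesis using tk by (simp add: tau_next_def Let_def)
    next
      case False
      then have tt: "T \<le> (1 - sig) * l1norm (c (x k)) / ?den" using trial by simp
      define tr where "tr = (1 - sig) * l1norm (c (x k)) / ?den"
      have tk2: "tau k = merit_update eps (prev k) tr"
        using tk False unfolding tr_def by (simp add: tau_next_def Let_def)
      show ?thesis
      proof (cases "prev k \<le> tr")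
        case True then show ?thesis using tk2 by (simp add: merit_update_def)
      next
        case F2: False
        have e1: "tau k = (1 - eps) * tr" using tk2 F2 by (simp add: merit_update_def)
        have "(1 - eps) * T \<le> (1 - eps) * tr" using tt eps unfolding tr_def
          by (intro mult_left_mono) auto
        moreover have "(1 - eps) * tr \<le> (1 - eps) * prev k" using F2 eps
          by (intro mult_left_mono) auto
        ultimately show ?thesis using e1 by simp
      qed
    qed
  qed
  define m where "m = min tau_init ((1 - eps) * T)"
  have m_pos: "m > 0" unfolding m_def using tau_init_pos T_pos eps by simp
  have lower: "tau k \<ge> m" for k
  proof (induction k)
    case 0
    have "prev 0 = tau_init" unfolding prev_def by simp
    then show ?case using stepk[of 0] unfolding m_def by auto
  next
    case (Suc k)
    have "prev (Suc k) = tau k" unfolding prev_def by simp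
    then show ?case using stepk[of "Suc k"] Suc unfolding m_def by auto
  qed
  have mono: "tau (Suc k) \<le> tau k" for k
  proof -
    have p: "prev (Suc k) = tau k" unfolding prev_def by simp
    have "tau k > 0" using lower[of k] m_pos by simp
    then have "(1 - eps) * tau k \<le> tau k" using eps by (simp add: mult_le_cancel_right1)
    then show ?thesis using stepk[of "Suc k"] p by auto
  qed
  define l where "l = Inf (range tau)"
  have bdd: "bdd_below (range tau)" using lower by (intro bdd_belowI2) auto
  have lm: "l \<ge> m" unfolding l_def using lower by (auto intro: cInf_greatest)
  have ll: "l \<le> tau k" for k unfolding l_def using bdd by (simp add: cInf_lower)
  have "l < l / (1 - eps)" using lm m_pos eps by (simp add: less_divide_eq)
  then obtain N where N: "tau N < l / (1 - eps)"
    unfolding l_def using bdd by (auto simp: cInf_less_iff)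
  have const: "tau k = tau N" if "k \<ge> N" for k
    using that
  proof (induction k rule: dec_induct)
    case base then show ?case by simp
  next
    case (step k)
    have p: "prev (Suc k) = tau k" unfolding prev_def by simp
    show ?case
    proof (rule ccontr)
      assume ne: "tau (Suc k) \<noteq> tau N"
      then have "tau (Suc k) \<le> (1 - eps) * tau N" using step.IH stepk[of "Suc k"] p by auto
      also have "\<dots> < l" using N eps by (simp add: less_divide_eq mult.commute)
      finally show False using ll[of "Suc k"] by simp
    qed
  qed
  have "tau N > 0" using lower[of N] m_pos by simp
  then show ?thesis using part1 const by blast
qed

end
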